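(* Let $X$ be a finite-dimensional real Hilbert space and $A,B$ nonempty closed convex subsets of $X$ with $\operatorname{ri}A\cap\operatorname{ri}B\neq\varnothing$. Let $T=P_BR_A+\mathrm{Id}-P_A$. Then $T$ is boundedly linearly regular: for every $\rho>0$ there exists $\kappa\ge0$ such that $d_{\operatorname{Fix}T}(x)\le\kappa\|x-Tx\|$ for all $x\in X$ with $\|x\|\le\rho$.
   Context: $P_C$ denotes the metric projection onto a closed convex set $C$, $R_C=2P_C-\mathrm{Id}$ the reflector, $d_C$ the distance to $C$, $\operatorname{ri}$ the relative interior, and $\operatorname{Fix}T$ the fixed point set of $T$. *)

theory Defs
  imports "HOL-Analysis.Analysis"
begin

abbreviation proj :: "'a::euclidean_space set \<Rightarrow> 'a \<Rightarrow> 'a" where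
  "proj C \<equiv> closest_point C"

definition refl :: "'a::euclidean_space set \<Rightarrow> 'a \<Rightarrow> 'a" where
  "refl C x = 2 *\<^sub>R proj C x - x"

definition DR_op :: "'a::euclidean_space set \<Rightarrow> 'a set \<Rightarrow> 'a \<Rightarrow> 'a" where
  "DR_op A B x = proj B (refl A x) + x - proj A x"

definition fixpoints :: "('a \<Rightarrow> 'a) \<Rightarrow> 'a set" where
  "fixpoints T = {x. T x = x}"

end

theory Submission imports Defs begin

lemma decomp_map:
  fixes L M :: "'a::euclidean_space set"
  assumes L: "subspace L" and M: "subspace M"
  shows "\<exists>g K. K \<ge> 1 \<and> (\<forall>y\<in>span (L \<union> M). g y \<in> L \<and> g y - y \<in> M \<and>
           norm (g y) \<le> K * norm y \<and> norm (g y - y) \<le> K * norm y)"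
proof -
  obtain Bs where Bs: "Bs \<subseteq> span (L \<union> M)" "independent Bs" "span (L \<union> M) \<subseteq> span Bs"
    by (metis basis_exists)
  define f where "f b = (SOME l. l \<in> L \<and> l - b \<in> M)" for b
  have fex: "f b \<in> L \<and> f b - b \<in> M" if "b \<in> span (L \<union> M)" for b
  proof -
    have sL: "span L = L" "span M = M" using L M by (simp_all add: span_eq_iff)
    from that obtain p q where pq: "p \<in> L" "q \<in> M" "b = p + q"
      using span_Un[of L M] unfolding sL by blast
    have "p \<in> L \<and> p - b \<in> M" using pq M by (simp add: subspace_neg)
    then show ?thesis unfolding f_def by (rule someI)
  qed
  obtain g where g: "linear g" "\<And>b. b \<in> Bs \<Longrightarrow> g b = f b"
    using linear_independent_extend[OF Bs(2), of f] by blast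
  have h: "linear (\<lambda>y. g y - y)" using g(1) by (simp add: linear_compose_sub linear_id[unfolded id_def])
  have gL: "g y \<in> L" if "y \<in> span (L \<union> M)" for y
  proof -
    have "g ` Bs \<subseteq> L" using g(2) fex Bs(1) by auto
    then have "span (g ` Bs) \<subseteq> L" using L by (simp add: span_minimal)
    moreover have "g y \<in> span (g ` Bs)"
      using that Bs(3) span_linear_image[OF g(1), of Bs] by auto
    ultimately show ?thesis by auto
  qed
  have gM: "g y - y \<in> M" if "y \<in> span (L \<union> M)" for y
  proof -
    have "(\<lambda>y. g y - y) ` Bs \<subseteq> M" using g(2) fex Bs(1) by auto
    then have "span ((\<lambda>y. g y - y) ` Bs) \<subseteq> M" using M by (simp add: span_minimal)
    moreover have "g y - y \<in> span ((\<lambda>y. g y - y) ` Bs)"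
      using that Bs(3) span_linear_image[OF h, of Bs] by auto
    ultimately show ?thesis by auto
  qed
  obtain C where C: "\<And>x. norm (g x) \<le> C * norm x" using linear_bounded[OF g(1)] by blast
  define K where "K = \<bar>C\<bar> + 1"
  have K1: "K \<ge> 1" unfolding K_def by simp
  have "norm (g y) \<le> K * norm y" for y
  proof -
    have "C * norm y \<le> K * norm y" unfolding K_def by (intro mult_right_mono) auto
    then show ?thesis using C[of y] by linarith
  qed
  moreover have "norm (g y - y) \<le> K * norm y" for y
  proof -
    have "norm (g y - y) \<le> norm (g y) + norm y" by (rule norm_triangle_ineq4)
    also have "\<dots> \<le> (\<bar>C\<bar> + 1) * norm y" proof -
      have "C * norm y \<le> \<bar>C\<bar> * norm y" by (intro mult_right_mono) auto
      then show ?thesis using C[of y] by (simp add: distrib_right)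
    qed
    also have "\<dots> \<le> K * norm y" unfolding K_def by (intro mult_right_mono) auto
    finally show ?thesis .
  qed
  ultimately show ?thesis using gL gM K1 by (intro exI[of _ g] exI[of _ K]) blast
qed


lemma proj_orth:
  fixes S :: "'a::euclidean_space set"
  assumes "closed S" "convex S" "c \<in> S" "\<And>z. z \<in> S \<Longrightarrow> inner (z - c) w = 0"
  shows "closest_point S (c + w) = c"
proof -
  have "dist (c + w) c \<le> dist (c + w) z" if z: "z \<in> S" for z
  proof -
    have i: "inner (c - z) w = 0" using assms(4)[OF z]
      by (metis inner_minus_left minus_diff_eq neg_equal_0_iff_equal)
    have "(norm w)^2 \<le> (norm ((c - z) + w))^2" using norm_add_Pythagorean[of "c - z" w] i by (simp add: orthogonal_def)
    then have "norm w \<le> norm ((c - z) + w)" by (rule power2_le_imp_le) simp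
    then show ?thesis by (simp add: dist_norm algebra_simps)
  qed
  then show ?thesis using closest_point_unique[OF assms(2,1,3)] by auto
qed

theorem theorem4p5:
  fixes A B :: "'a::euclidean_space set"
  assumes "A \<noteq> {}" "closed A" "convex A"
      and "B \<noteq> {}" "closed B" "convex B"
      and "rel_interior A \<inter> rel_interior B \<noteq> {}"
  shows "\<forall>\<rho>>0. \<exists>\<kappa>\<ge>0. \<forall>x. norm x \<le> \<rho> \<longrightarrow>
           infdist x (fixpoints (DR_op A B)) \<le> \<kappa> * norm (x - DR_op A B x)"
proof -
  obtain z0 where z0A: "z0 \<in> rel_interior A" and z0B: "z0 \<in> rel_interior B" using assms(7) by blast
  obtain rA where rA: "rA > 0" "cball z0 rA \<inter> affine hull A \<subseteq> A"
    using z0A mem_rel_interior_cball by blast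
  obtain rB where rB: "rB > 0" "cball z0 rB \<inter> affine hull B \<subseteq> B"
    using z0B mem_rel_interior_cball by blast
  have z0inA: "z0 \<in> A" using z0A rel_interior_subset by blast
  have z0inB: "z0 \<in> B" using z0B rel_interior_subset by blast
  define r where "r = min rA rB"
  have r: "r > 0" using rA rB by (simp add: r_def)
  define L where "L = affine hull ((\<lambda>x. -z0 + x) ` A)"
  define M where "M = affine hull ((\<lambda>x. -z0 + x) ` B)"
  have subL: "subspace L" unfolding L_def subspace_affine
    using z0inA by (auto intro!: hull_inc)
  have subM: "subspace M" unfolding M_def subspace_affine
    using z0inB by (auto intro!: hull_inc)
  have AL: "a - z0 \<in> L" if "a \<in> A" for a
    unfolding L_def using that by (intro hull_inc) (auto simp: image_iff)
  have BM: "a - z0 \<in> M" if "a \<in> B" for a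
    unfolding M_def using that by (intro hull_inc) (auto simp: image_iff)
  have LA: "z0 + l \<in> A" if "l \<in> L" "norm l \<le> r" for l
  proof -
    have "l \<in> (\<lambda>x. -z0 + x) ` (affine hull A)" using that(1) unfolding L_def affine_hull_translation .
    then have "z0 + l \<in> affine hull A" by auto
    moreover have "z0 + l \<in> cball z0 rA" using that(2) unfolding r_def by (auto simp: dist_norm)
    ultimately show ?thesis using rA(2) by blast
  qed
  have MB: "z0 + l \<in> B" if "l \<in> M" "norm l \<le> r" for l
  proof -
    have "l \<in> (\<lambda>x. -z0 + x) ` (affine hull B)" using that(1) unfolding M_def affine_hull_translation .
    then have "z0 + l \<in> affine hull B" by auto
    moreover have "z0 + l \<in> cball z0 rB" using that(2) unfolding r_def by (auto simp: dist_norm)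
    ultimately show ?thesis using rB(2) by blast
  qed
  define V where "V = span (L \<union> M)"
  have LV: "L \<subseteq> V" "M \<subseteq> V" unfolding V_def by (meson Un_subset_iff span_superset)+
  have AV: "z - c \<in> V" if "z \<in> A" "c \<in> A" for z c
  proof -
    have "(z - z0) - (c - z0) \<in> V" unfolding V_def
      by (rule span_diff) (use AL that LV in \<open>auto simp: V_def\<close>)
    then show ?thesis by simp
  qed
  have BV: "z - c \<in> V" if "z \<in> B" "c \<in> B" for z c
  proof -
    have "(z - z0) - (c - z0) \<in> V" unfolding V_def
      by (rule span_diff) (use BM that LV in \<open>auto simp: V_def\<close>)
    then show ?thesis by simp
  qed
  obtain g K where K: "K \<ge> 1" and gp: "\<And>y. y \<in> V \<Longrightarrow> g y \<in> L \<and> g y - y \<in> M \<and>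
      norm (g y) \<le> K * norm y \<and> norm (g y - y) \<le> K * norm y"
    using decomp_map[OF subL subM] unfolding V_def by blast
  have fixp: "c + w \<in> fixpoints (DR_op A B)"
    if c: "c \<in> A" "c \<in> B" and w: "\<And>v. v \<in> V \<Longrightarrow> inner w v = 0" for c w
  proof -
    have pa: "proj A (c + w) = c"
      by (rule proj_orth[OF assms(2,3) c(1)]) (use AV c w in \<open>metis inner_commute\<close>)
    have rf: "refl A (c + w) = c + (-w)" by (simp add: refl_def pa scaleR_2 algebra_simps)
    have pb: "proj B (c + (-w)) = c"
      by (rule proj_orth[OF assms(5,6) c(2)]) (use BV c w in \<open>metis inner_commute inner_minus_right neg_0_equal_iff_equal\<close>)
    show ?thesis using pb by (simp add: fixpoints_def DR_op_def pa rf)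
  qed
  show ?thesis
  proof (intro allI impI)
    fix \<rho> :: real assume rho: "\<rho> > 0"
    define R where "R = \<rho> + norm z0"
    define \<kappa> where "\<kappa> = K * (6*R + r) / r + (2*R*K/r + K)"
    have R0: "R \<ge> 0" using rho by (simp add: R_def)
    have k0: "\<kappa> \<ge> 0" unfolding \<kappa>_def using K r R0
      by (intro add_nonneg_nonneg divide_nonneg_pos mult_nonneg_nonneg) auto
    show "\<exists>\<kappa>\<ge>0. \<forall>x. norm x \<le> \<rho> \<longrightarrow>
           infdist x (fixpoints (DR_op A B)) \<le> \<kappa> * norm (x - DR_op A B x)"
    proof (intro exI[of _ \<kappa>] conjI allI impI k0)
      fix x :: 'a assume nx: "norm x \<le> \<rho>"
      define a where "a = proj A x"
      define b where "b = proj B (refl A x)"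
      define e where "e = a - b"
      define u where "u = x - a"
      have aA: "a \<in> A" unfolding a_def by (rule closest_point_in_set[OF assms(2,1)])
      have bB: "b \<in> B" unfolding b_def by (rule closest_point_in_set[OF assms(5,4)])
      have DRx: "x - DR_op A B x = e" by (simp add: DR_op_def a_def b_def e_def)
      have reflx: "refl A x = 2 *\<^sub>R a - x" by (simp add: refl_def a_def)
      have xz: "norm (x - z0) \<le> R" using nx norm_triangle_ineq4[of x z0] by (simp add: R_def)
      have nu: "norm u \<le> R"
      proof -
        have "dist x a \<le> dist x z0" unfolding a_def by (rule closest_point_le[OF assms(2) z0inA])
        then show ?thesis using xz by (simp add: u_def dist_norm)
      qed
      have az: "norm (a - z0) \<le> 2*R"
      proof -
        have "a - z0 = (x - z0) - u" by (simp add: u_def)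
        then have "norm (a - z0) \<le> norm (x - z0) + norm u" by (metis norm_triangle_ineq4)
        then show ?thesis using xz nu by simp
      qed
      have bz: "norm (b - z0) \<le> 5*R"
      proof -
        have "dist b z0 \<le> dist (refl A x) z0"
          using closest_point_lipschitz[OF assms(6,5,4), of "refl A x" z0] closest_point_self[OF z0inB]
          by (simp add: b_def)
        moreover have "refl A x - z0 = 2 *\<^sub>R (a - z0) - (x - z0)" by (simp add: reflx scaleR_2 algebra_simps)
        moreover have "norm (2 *\<^sub>R (a - z0) - (x - z0)) \<le> 2 * norm (a - z0) + norm (x - z0)"
          by (metis norm_triangle_ineq4 norm_scaleR abs_numeral)
        ultimately show ?thesis using az xz by (simp add: dist_norm)
      qed
      have N1: "inner u (z - a) \<le> 0" if "z \<in> A" for z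
        using closest_point_dot[OF assms(3,2) that, of x] unfolding a_def u_def .
      have N2: "inner (e - u) (z - b) \<le> 0" if "z \<in> B" for z
      proof -
        have "refl A x - b = e - u" by (simp add: reflx e_def u_def scaleR_2 algebra_simps)
        then show ?thesis using closest_point_dot[OF assms(6,5) that, of "refl A x"] unfolding b_def by simp
      qed
      have eV: "e \<in> V"
      proof -
        have "(a - z0) - (b - z0) \<in> V" unfolding V_def
          by (rule span_diff) (use AL BM aA bB LV in \<open>auto simp: V_def\<close>)
        then show ?thesis by (simp add: e_def)
      qed
      obtain y w where yV: "y \<in> V" and wo: "\<And>v. v \<in> V \<Longrightarrow> inner w v = 0" and uyw: "u = y + w"
        using orthogonal_subspace_decomp_exists[of "L \<union> M" u] unfolding V_def orthogonal_def by metis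
      have ybound: "norm y \<le> K * (6*R + r) / r * norm e"
      proof (cases "y = 0")
        case True then show ?thesis using K r R0 by simp
      next
        case False
        define t where "t = r / (K * norm y)"
        have t0: "t > 0" using r K False by (simp add: t_def)
        define l where "l = g y"
        define m where "m = g y - y"
        have lL: "l \<in> L" and mM: "m \<in> M" and nl: "norm l \<le> K * norm y" and nm: "norm m \<le> K * norm y"
          using gp[OF yV] by (simp_all add: l_def m_def)
        have tK: "t * (K * norm y) = r" using K False by (simp add: t_def)
        have tl: "norm (t *\<^sub>R l) \<le> r"
          using mult_left_mono[OF nl, of t] t0 tK by simp
        have tm: "t * norm m \<le> r"
          using mult_left_mono[OF nm, of t] t0 tK by simp
        have zA: "z0 + t *\<^sub>R l \<in> A" by (rule LA[OF subspace_scale[OF subL lL] tl])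
        have zB: "z0 + t *\<^sub>R m \<in> B" by (rule MB[OF subspace_scale[OF subM mM]]) (use tm t0 in simp)
        have h1: "t * inner u l \<le> inner u (a - z0)"
          using N1[OF zA] by (simp add: inner_diff_right inner_add_right algebra_simps)
        have h2: "t * inner (e - u) m \<le> inner (e - u) (b - z0)"
          using N2[OF zB] by (simp add: inner_diff_right inner_add_right algebra_simps)
        have lmy: "l - m = y" by (simp add: l_def m_def)
        have e1: "inner u e = inner u (a - z0) - inner u (b - z0)"
          by (simp add: e_def inner_diff_right)
        have e2: "inner u y = inner u l - inner u m" by (simp add: lmy[symmetric] inner_diff_right)
        have e3: "inner (e - u) m = inner e m - inner u m" by (simp add: inner_diff_left)
        have e4: "inner (e - u) (b - z0) = inner e (b - z0) - inner u (b - z0)" by (simp add: inner_diff_left)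
        have key: "t * inner u y \<le> inner u e + inner e (b - z0) - t * inner e m"
        proof -
          have "t * inner u l = t * inner u m + t * inner u y" using e2 by (simp add: right_diff_distrib)
          moreover have "t * inner (e - u) m = t * inner e m - t * inner u m" using e3 by (simp add: right_diff_distrib)
          ultimately show ?thesis using h1 h2 e1 e4 by linarith
        qed
        have uy: "inner u y = (norm y)^2"
          using wo[OF yV] by (simp add: uyw inner_add_left power2_norm_eq_inner)
        have c1: "inner u e \<le> norm u * norm e" by (rule norm_cauchy_schwarz)
        have c2: "inner e (b - z0) \<le> norm e * norm (b - z0)" by (rule norm_cauchy_schwarz)
        have c3: "- inner e m \<le> norm e * norm m"
          using norm_cauchy_schwarz[of e "-m"] by simp
        have c3': "- (t * inner e m) \<le> norm e * (t * norm m)"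
          using mult_left_mono[OF c3, of t] t0 by (simp add: algebra_simps)
        have c4: "norm e * (t * norm m) \<le> norm e * r" using tm by (simp add: mult_left_mono)
        have c5: "norm u * norm e \<le> R * norm e" using nu by (simp add: mult_right_mono)
        have c6: "norm e * norm (b - z0) \<le> norm e * (5 * R)" using bz by (simp add: mult_left_mono)
        have "t * (norm y)^2 \<le> norm e * (6*R + r)"
          using key uy c1 c2 c3' c4 c5 c6 by (simp add: algebra_simps)
        moreover have "t * (norm y)^2 = r * norm y / K" using False K
          by (simp add: t_def power2_eq_square field_simps)
        ultimately have "r * norm y / K \<le> norm e * (6*R + r)" by simp
        then have "r * norm y \<le> K * (norm e * (6*R + r))" using K by (simp add: pos_divide_le_eq mult.commute)
        then have "norm y \<le> K * (norm e * (6*R + r)) / r" using r by (simp add: pos_le_divide_eq mult.commute)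
        then show ?thesis by (simp add: algebra_simps)
      qed
      obtain c where cA: "c \<in> A" and cB: "c \<in> B" and ac: "norm (a - c) \<le> (2*R*K/r + K) * norm e"
      proof (cases "e = 0")
        case True
        then have "a = b" by (simp add: e_def)
        then show ?thesis using that[of a] aA bB True by simp
      next
        case False
        define ne where "ne = norm e"
        have ne: "ne > 0" using False by (simp add: ne_def)
        define l where "l = g e"
        define m where "m = g e - e"
        have lL: "l \<in> L" and mM: "m \<in> M" and nl: "norm l \<le> K * ne" and nm: "norm m \<le> K * ne"
          using gp[OF eV] by (simp_all add: l_def m_def ne_def)
        define \<mu> where "\<mu> = r / (K * ne)"
        have mu: "\<mu> > 0" using r K ne by (simp add: \<mu>_def)
        have muK: "\<mu> * (K * ne) = r" using K ne by (simp add: \<mu>_def)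
        define lam where "lam = 1 / (1 + \<mu>)"
        have lam0: "0 \<le> lam" "lam \<le> 1" using mu by (simp_all add: lam_def)
        have lammu: "lam * \<mu> = 1 - lam" using mu by (simp add: lam_def field_simps)
        have lamle: "lam \<le> K * ne / r"
        proof -
          have "lam \<le> 1 / \<mu>" unfolding lam_def using mu by (simp add: frac_le)
          also have "1 / \<mu> = K * ne / r" using K ne r by (simp add: \<mu>_def)
          finally show ?thesis .
        qed
        have nml: "norm (\<mu> *\<^sub>R l) \<le> r" using mult_left_mono[OF nl, of \<mu>] mu muK by simp
        have nmm: "norm (\<mu> *\<^sub>R m) \<le> r" using mult_left_mono[OF nm, of \<mu>] mu muK by simp
        have z1: "z0 - \<mu> *\<^sub>R l \<in> A"
          using LA[OF subspace_neg[OF subL subspace_scale[OF subL lL]]] nml by simp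
        have z2: "z0 - \<mu> *\<^sub>R m \<in> B"
          using MB[OF subspace_neg[OF subM subspace_scale[OF subM mM]]] nmm by simp
        define c where "c = (1 - lam) *\<^sub>R a + lam *\<^sub>R (z0 - \<mu> *\<^sub>R l)"
        have "c \<in> A" unfolding c_def by (rule convexD[OF assms(3) aA z1]) (use lam0 in auto)
        moreover have "c = (1 - lam) *\<^sub>R b + lam *\<^sub>R (z0 - \<mu> *\<^sub>R m)"
        proof -
          have lme: "l - m = a - b" by (simp add: l_def m_def e_def)
          have "c = (1 - lam) *\<^sub>R a - (lam * \<mu>) *\<^sub>R l + lam *\<^sub>R z0"
            by (simp add: c_def algebra_simps)
          also have "\<dots> = (1 - lam) *\<^sub>R (a - l) + lam *\<^sub>R z0" by (simp only: lammu) (simp add: algebra_simps)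
          also have "a - l = b - m" using lme by (simp add: algebra_simps)
          also have "(1 - lam) *\<^sub>R (b - m) + lam *\<^sub>R z0 = (1 - lam) *\<^sub>R b - (lam * \<mu>) *\<^sub>R m + lam *\<^sub>R z0"
            by (simp only: lammu) (simp add: algebra_simps)
          also have "\<dots> = (1 - lam) *\<^sub>R b + lam *\<^sub>R (z0 - \<mu> *\<^sub>R m)" by (simp add: algebra_simps)
          finally show ?thesis .
        qed
        then have "c \<in> B" using convexD[OF assms(6) bB z2, of "1 - lam" lam] lam0 by simp
        moreover have "norm (a - c) \<le> (2*R*K/r + K) * ne"
        proof -
          have "a - c = lam *\<^sub>R (a - z0) + (lam * \<mu>) *\<^sub>R l" by (simp add: c_def algebra_simps)
          then have "norm (a - c) \<le> lam * norm (a - z0) + (lam * \<mu>) * norm l"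
            using norm_triangle_ineq[of "lam *\<^sub>R (a - z0)" "(lam * \<mu>) *\<^sub>R l"] lam0 mu by simp
          also have "\<dots> \<le> (K * ne / r) * (2 * R) + 1 * (K * ne)"
          proof (rule add_mono)
            show "lam * norm (a - z0) \<le> (K * ne / r) * (2 * R)"
              using mult_mono[OF lamle az] K ne r lam0 by simp
            show "lam * \<mu> * norm l \<le> 1 * (K * ne)"
              using mult_mono[of "lam * \<mu>" 1 "norm l" "K * ne"] lammu lam0 nl by simp
          qed
          also have "\<dots> = (2*R*K/r + K) * ne" by (simp add: field_simps)
          finally show ?thesis .
        qed
        ultimately show ?thesis using that ne_def by blast
      qed
      have fc: "c + w \<in> fixpoints (DR_op A B)" by (rule fixp[OF cA cB wo])
      have "x = a + y + w" using uyw by (simp add: u_def algebra_simps)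
      then have "dist x (c + w) = norm ((a - c) + y)" by (simp add: dist_norm algebra_simps)
      also have "\<dots> \<le> norm (a - c) + norm y" by (rule norm_triangle_ineq)
      also have "\<dots> \<le> \<kappa> * norm e" using ac ybound by (simp add: \<kappa>_def algebra_simps)
      finally have "dist x (c + w) \<le> \<kappa> * norm e" .
      then show "infdist x (fixpoints (DR_op A B)) \<le> \<kappa> * norm (x - DR_op A B x)"
        using infdist_le[OF fc, of x] DRx by simp
    qed
  qed
qed

end
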